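(* Let $\alpha\in\{0,1,2\}^*$ be a finite ternary string and let $c_\infty[\alpha]$ be the CQCA limit configuration on input $\alpha$. Let $e=(x_0,y_0)\in\mathbb{Z}^2$ be such that both cells $e+N$ and $e+W$ are defined in $c_\infty[\alpha]$ (an anchor cell). Then there exists $z\in\mathbb{N}$ such that: the cells $(x_0,y)$ with $y_0<y\le|\alpha|$ are all defined and give a base-$3'$ word $\gamma$ with $[\![\gamma]\!]_{3'}=z$; and the cells $(x,y_0)$ with $x<x_0$ all have defined sum bits $b_x$, only finitely many of which are $1$, with $\sum_{x<x_0}b_x\,2^{x_0-1-x}=z$ (i.e. the sum bits strictly west of $e$ on row $y_0$ form the base-2 representation of $z$, least significant bit at $e+W$).
   Context: Notation: $E=(1,0)$, $W=(-1,0)$, $N=(0,1)$, $S=(0,-1)$ in $\mathbb{Z}^2$; $[P]\in\{0,1\}$ equals $1$ iff $P$ holds. Strings are indexed from the right. Base $3'$: words over $\{0,\bar0,1,\bar1\}$ with trit values $0\mapsto0$, $\bar0\mapsto1$, $1\mapsto1$, $\bar1\mapsto2$, and $[\![\gamma]\!]_{3'}=\sum_i\mathrm{val}(\gamma_i)3^i$. The symbols $0,\bar0,1,\bar1$ are identified with the cell states $(0,0),(0,1),(1,0),(1,1)$. The encoding $\mathrm{enc}:\{0,1,2\}^*\to\{0,\bar0,1,\bar1\}^*$ acts symbol by symbol: $0\mapsto0$, $2\mapsto\bar1$, and a digit $\alpha_i=1$ maps to $1$ if there exists $j<i$ with $\alpha_j\ne1$ and the largest such $j$ has $\alpha_j=2$,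 and to $\bar0$ otherwise. A vertical contiguous segment of defined cells gives the base-$3'$ word formed by the cells' states read from north (most significant) to south (least significant). The CQCA. State set $\Sigma=\{0,1,\bot\}^2\setminus\{(\bot,0),(\bot,1)\}$; a state $(s,c)$ has sum bit $s$ and carry bit $c$; it is undefined if $(\bot,\bot)$, half-defined if $s\in\{0,1\},c=\bot$, defined if $s,c\in\{0,1\}$. One step $F(C)$ of a configuration $C:\mathbb{Z}^2\to\Sigma$: first the non-local rule gives $C'$: $C'(u)=(0,1)$ if $C(u+W)=(1,\bot)$, $C(u)\in\{(0,\bot),(\bot,\bot)\}$ and $C(u+iE)\in\{(0,\bot),(\bot,\bot)\}$ for all $i\ge1$; otherwise $C'(u)=C(u)$. Then the local rule on $C'$ at all cells simultaneously: (i) if $C'(u)=(s,\bot)$ half-defined and $C'(u+E)=(s',c')$ defined, $F(C)(u)=(s,[s+s'+c'\ge2])$; (ii) if $C'(u)=(\bot,\bot)$, $C'(u+N)=(s,\bot)$ half-defined and $C'(u+N+E)=(s',c')$ defined, $F(C)(u)=((s+s'+c')\bmod2,\bot)$; (iii) otherwise $F(C)(u)=C'(u)$. For $\alpha\in\{0,1,2\}^*$ with $\gamma=\mathrm{enc}(\alpha)$, the initial configuration $c_0[\alpha]$ is: $c_0[\alpha](0,i)=\gamma_{i-1}$ for $1\le i\le|\alpha|$, $c_0[\alpha](x,|\alpha|)=(0,\bot)$ for all $x<0$, and $(\bot,\bot)$ elsewhere. Each cell's state in $F^i(c_0[\alpha])$ is eventually constant; $c_\infty[\alpha]$ is the pointwise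 limit. *)

theory Defs
  imports Main
begin

text \<open>Cell states: pairs (sum bit, carry bit), None encoding the undefined value.
  Only the states in Sigma occur (carry defined implies sum defined).\<close>
type_synonym state = "bool option \<times> bool option"
type_synonym cell = "int \<times> int"
type_synonym config = "cell \<Rightarrow> state"

definition Sigma :: "state set" where
  "Sigma = UNIV - {(None, Some False), (None, Some True)}"

definition undef_st :: state where "undef_st = (None, None)"

definition is_defined :: "state \<Rightarrow> bool" where
  "is_defined st \<longleftrightarrow> fst st \<noteq> None \<and> snd st \<noteq> None"

definition half_defined :: "state \<Rightarrow> bool" where
  "half_defined st \<longleftrightarrow> fst st \<noteq> None \<and> snd st = None"

definition dirE :: cell where "dirE = (1, 0)"
definition dirW :: cell where "dirW = (-1, 0)"
definition dirN :: cell where "dirN = (0, 1)"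
definition dirS :: cell where "dirS = (0, -1)"

definition cadd :: "cell \<Rightarrow> cell \<Rightarrow> cell" where
  "cadd u v = (fst u + fst v, snd u + snd v)"

definition cscale :: "int \<Rightarrow> cell \<Rightarrow> cell" where
  "cscale i v = (i * fst v, i * snd v)"

definition nonlocal_step :: "config \<Rightarrow> config" where
  "nonlocal_step C u =
    (if C (cadd u dirW) = (Some True, None)
        \<and> C u \<in> {(Some False, None), (None, None)}
        \<and> (\<forall>i::int. i \<ge> 1 \<longrightarrow> C (cadd u (cscale i dirE)) \<in> {(Some False, None), (None, None)})
     then (Some False, Some True) else C u)"

definition bitn :: "bool option \<Rightarrow> nat" where
  "bitn b = (case b of Some True \<Rightarrow> 1 | _ \<Rightarrow> 0)"

definition local_step :: "config \<Rightarrow> config" where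
  "local_step C' u =
    (if half_defined (C' u) \<and> is_defined (C' (cadd u dirE)) then
       (fst (C' u),
        Some (bitn (fst (C' u)) + bitn (fst (C' (cadd u dirE))) + bitn (snd (C' (cadd u dirE))) \<ge> 2))
     else if C' u = (None, None) \<and> half_defined (C' (cadd u dirN))
             \<and> is_defined (C' (cadd (cadd u dirN) dirE)) then
       (Some (odd (bitn (fst (C' (cadd u dirN))) + bitn (fst (C' (cadd (cadd u dirN) dirE)))
                   + bitn (snd (C' (cadd (cadd u dirN) dirE))))), None)
     else C' u)"

definition F :: "config \<Rightarrow> config" where
  "F C = local_step (nonlocal_step C)"

text \<open>Strings are lists; index i counts from the right: alpha_i = alpha ! (length alpha - 1 - i).\<close>
definition rdig :: "'a list \<Rightarrow> nat \<Rightarrow> 'a" where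
  "rdig xs i = xs ! (length xs - 1 - i)"

text \<open>Encoding of a ternary digit string into base-3' symbols (as cell states):
  0 = (0,0), 0bar = (0,1), 1 = (1,0), 1bar = (1,1).\<close>
definition enc_digit :: "nat list \<Rightarrow> nat \<Rightarrow> state" where
  "enc_digit \<alpha> i =
    (if rdig \<alpha> i = 0 then (Some False, Some False)
     else if rdig \<alpha> i = 2 then (Some True, Some True)
     else if (\<exists>j<i. rdig \<alpha> j \<noteq> 1) \<and> rdig \<alpha> (GREATEST j. j < i \<and> rdig \<alpha> j \<noteq> 1) = 2
       then (Some True, Some False)
       else (Some False, Some True))"

definition c0 :: "nat list \<Rightarrow> config" where
  "c0 \<alpha> u =
    (if fst u = 0 \<and> 1 \<le> snd u \<and> snd u \<le> int (length \<alpha>) then enc_digit \<alpha> (nat (snd u - 1))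
     else if fst u < 0 \<and> snd u = int (length \<alpha>) then (Some False, None)
     else (None, None))"

text \<open>Pointwise limit of the iterates (each cell is eventually constant).\<close>
definition c_inf :: "nat list \<Rightarrow> config" where
  "c_inf \<alpha> u = (THE v. \<exists>n0. \<forall>n\<ge>n0. (F ^^ n) (c0 \<alpha>) u = v)"

text \<open>Trit value of a defined cell: 0 -> 0, 0bar -> 1, 1 -> 1, 1bar -> 2.\<close>
definition trit_val :: "state \<Rightarrow> nat" where
  "trit_val st = bitn (fst st) + bitn (snd st)"

text \<open>Base-3' value of the vertical word in column x, rows y0 < y <= ytop
  (northmost most significant, row y0+1 is digit 0).\<close>
definition col_val :: "config \<Rightarrow> int \<Rightarrow> int \<Rightarrow> int \<Rightarrow> nat" where
  "col_val C x y0 ytop = (\<Sum>y\<in>{y0<..ytop}. trit_val (C (x, y)) * 3 ^ nat (y - y0 - 1))"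

end

theory Submission
  imports Defs
begin


definition zl :: "state \<Rightarrow> bool" where
  "zl st \<longleftrightarrow> st = (Some False, None) \<or> st = (None, None)"

definition fire :: "config \<Rightarrow> int \<Rightarrow> int \<Rightarrow> bool" where
  "fire C x y \<longleftrightarrow> C (x-1,y) = (Some True, None) \<and> zl (C (x,y)) \<and> (\<forall>i::int. i \<ge> 1 \<longrightarrow> zl (C (x+i,y)))"

definition maj :: "state \<Rightarrow> state \<Rightarrow> bool" where
  "maj a b \<longleftrightarrow> bitn (fst a) + bitn (fst b) + bitn (snd b) \<ge> 2"

definition par :: "state \<Rightarrow> state \<Rightarrow> bool" where
  "par a b \<longleftrightarrow> odd (bitn (fst a) + bitn (fst b) + bitn (snd b))"

lemma nl_eq: "nonlocal_step C (x,y) = (if fire C x y then (Some False, Some True) else C (x,y))"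
  unfolding nonlocal_step_def fire_def zl_def cadd_def dirW_def cscale_def dirE_def
  by (auto simp: insert_iff)

lemma loc_eq: "local_step C' (x,y) =
  (if half_defined (C' (x,y)) \<and> is_defined (C' (x+1,y)) then (fst (C' (x,y)), Some (maj (C' (x,y)) (C' (x+1,y))))
   else if C' (x,y) = (None,None) \<and> half_defined (C' (x,y+1)) \<and> is_defined (C' (x+1,y+1))
   then (Some (par (C' (x,y+1)) (C' (x+1,y+1))), None) else C' (x,y))"
  unfolding local_step_def maj_def par_def cadd_def dirE_def dirN_def by simp

lemma F_eq: "F C (x,y) = local_step (nonlocal_step C) (x,y)"
  unfolding F_def by simp

lemma zl_nd: "zl st \<Longrightarrow> \<not> is_defined st"
  unfolding zl_def is_defined_def by auto

lemma G1: "is_defined (C (x,y)) \<Longrightarrow> nonlocal_step C (x,y) = C (x,y)"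
  by (auto simp: nl_eq fire_def dest: zl_nd)

lemma G2: "is_defined (nonlocal_step C (x,y)) \<Longrightarrow> F C (x,y) = nonlocal_step C (x,y)"
  by (auto simp: F_eq loc_eq half_defined_def is_defined_def)

lemma G3: "is_defined (C (x,y)) \<Longrightarrow> F C (x,y) = C (x,y)"
  using G1 G2 by metis

lemma G5: "fire C x y \<Longrightarrow> F C (x,y) = (Some False, Some True)"
  by (subst G2) (auto simp: nl_eq is_defined_def)

lemma G4: "fst (C (x,y)) \<noteq> None \<Longrightarrow> fst (F C (x,y)) = fst (C (x,y))"
  by (auto simp: F_eq loc_eq nl_eq fire_def zl_def)

lemma G6: "is_defined (nonlocal_step C (x,y)) \<Longrightarrow> is_defined (C (x,y)) \<or> fire C x y"
  by (auto simp: nl_eq split: if_splits)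

lemma G7: "half_defined (nonlocal_step C (x,y)) \<Longrightarrow> nonlocal_step C (x,y) = C (x,y) \<and> \<not> fire C x y"
  by (auto simp: nl_eq half_defined_def split: if_splits)

lemma G8: "F C (x,y) = C (x,y) \<or> (fire C x y \<and> F C (x,y) = (Some False, Some True)) \<or>
   (\<not> fire C x y \<and> half_defined (C (x,y)) \<and> is_defined (nonlocal_step C (x+1,y)) \<and>
      F C (x,y) = (fst (C (x,y)), Some (maj (C (x,y)) (nonlocal_step C (x+1,y))))) \<or>
   (\<not> fire C x y \<and> C (x,y) = (None,None) \<and> half_defined (nonlocal_step C (x,y+1)) \<and>
      is_defined (nonlocal_step C (x+1,y+1)) \<and>
      F C (x,y) = (Some (par (nonlocal_step C (x,y+1)) (nonlocal_step C (x+1,y+1))), None))"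
  by (cases "fire C x y") (auto simp: F_eq loc_eq nl_eq G5 half_defined_def)

lemma G9: "half_defined (nonlocal_step C (x,y)) \<Longrightarrow> is_defined (nonlocal_step C (x+1,y)) \<Longrightarrow>
   F C (x,y) = (fst (nonlocal_step C (x,y)), Some (maj (nonlocal_step C (x,y)) (nonlocal_step C (x+1,y))))"
  by (simp add: F_eq loc_eq)

lemma G10: "\<not> fire C x y \<Longrightarrow> C (x,y) = (None,None) \<Longrightarrow> half_defined (nonlocal_step C (x,y+1)) \<Longrightarrow>
   is_defined (nonlocal_step C (x+1,y+1)) \<Longrightarrow>
   F C (x,y) = (Some (par (nonlocal_step C (x,y+1)) (nonlocal_step C (x+1,y+1))), None)"
  by (simp add: F_eq loc_eq nl_eq half_defined_def)

definition rank :: "state \<Rightarrow> nat" where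
  "rank st = (if is_defined st then 2 else if fst st \<noteq> None then 1 else 0)"

lemma rank_step: "rank (C u) \<le> rank (F C u) \<and> (F C u \<noteq> C u \<longrightarrow> rank (C u) < rank (F C u))"
proof -
  obtain x y where u: "u = (x,y)" by (cases u)
  show ?thesis using G8[of C x y] unfolding u
    by (auto simp: rank_def is_defined_def half_defined_def fire_def zl_def)
qed

lemma rank_le2: "rank st \<le> 2" by (simp add: rank_def)




abbreviation nn :: "nat list \<Rightarrow> int" where "nn \<alpha> \<equiv> int (length \<alpha>)"

definition init :: "nat list \<Rightarrow> int \<Rightarrow> int \<Rightarrow> bool" where
  "init \<alpha> x y \<longleftrightarrow> x = 0 \<and> 1 \<le> y \<and> y \<le> nn \<alpha>"

definition normal :: "config \<Rightarrow> int \<Rightarrow> int \<Rightarrow> bool" where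
  "normal C x y \<longleftrightarrow> is_defined (C (x+1,y)) \<and> snd (C (x,y)) = Some (maj (C (x,y)) (C (x+1,y)))"

definition termc :: "config \<Rightarrow> int \<Rightarrow> int \<Rightarrow> bool" where
  "termc C x y \<longleftrightarrow> C (x,y) = (Some False, Some True) \<and> fst (C (x-1,y)) = Some True \<and> (\<forall>x'>x. zl (C (x',y)))"

definition Inv :: "nat list \<Rightarrow> config \<Rightarrow> bool" where
  "Inv \<alpha> C \<longleftrightarrow>
   (\<forall>u. fst (C u) = None \<longrightarrow> snd (C u) = None) \<and>
   (\<forall>x y. (y > nn \<alpha> \<or> x > 0) \<longrightarrow> C (x,y) = (None,None)) \<and>
   (\<forall>y. init \<alpha> 0 y \<longrightarrow> C (0,y) = enc_digit \<alpha> (nat (y-1))) \<and>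
   (\<forall>y\<le>0. C (0,y) = (None,None) \<or> C (0,y) = (Some False, Some True)) \<and>
   (\<forall>x<0. fst (C (x, nn \<alpha>)) = Some False) \<and>
   (\<forall>x y. is_defined (C (x,y)) \<and> \<not> init \<alpha> x y \<longrightarrow> normal C x y \<or> termc C x y) \<and>
   (\<forall>x y. fst (C (x,y)) \<noteq> None \<and> y < nn \<alpha> \<and> \<not> init \<alpha> x y \<longrightarrow>
      is_defined (C (x,y+1)) \<and>
      (is_defined (C (x+1,y+1)) \<longrightarrow> fst (C (x,y)) = Some (par (C (x,y+1)) (C (x+1,y+1)))) \<and>
      (is_defined (C (x+1,y+1)) \<or> termc C x y)) \<and>
   (\<forall>x y. is_defined (C (x,y+1)) \<and> is_defined (C (x+1,y+1)) \<longrightarrow> fst (C (x,y)) \<noteq> None)"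

lemma enc_defined: "is_defined (enc_digit \<alpha> i)"
  unfolding enc_digit_def is_defined_def by auto

lemma ivt_nat: fixes P :: "int \<Rightarrow> bool" shows "P x \<Longrightarrow> \<not> P (x + int m) \<Longrightarrow> \<exists>b. x \<le> b \<and> b < x + int m \<and> P b \<and> \<not> P (b+1)"
proof (induction m)
  case 0 then show ?case by simp
next
  case (Suc m)
  show ?case
  proof (cases "P (x + int m)")
    case True
    then show ?thesis using Suc.prems by (intro exI[of _ "x + int m"]) (auto simp: algebra_simps)
  next
    case False
    from Suc.IH[OF Suc.prems(1) False] show ?thesis by auto
  qed
qed

lemma ivt: fixes P :: "int \<Rightarrow> bool" shows "P x \<Longrightarrow> \<not> P x' \<Longrightarrow> x < x' \<Longrightarrow> \<exists>b. x \<le> b \<and> b < x' \<and> P b \<and> \<not> P (b+1)"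
  using ivt_nat[of P x "nat (x' - x)"] by auto

context
  fixes \<alpha> :: "nat list" and C :: config
  assumes I: "Inv \<alpha> C"
begin

lemma I0: "fst (C u) = None \<Longrightarrow> snd (C u) = None" using I unfolding Inv_def by blast
lemma I1: "y > nn \<alpha> \<or> x > 0 \<Longrightarrow> C (x,y) = (None,None)" using I unfolding Inv_def by blast
lemma I1b: "init \<alpha> 0 y \<Longrightarrow> C (0,y) = enc_digit \<alpha> (nat (y-1))" using I unfolding Inv_def by blast
lemma I1c: "y \<le> 0 \<Longrightarrow> C (0,y) = (None,None) \<or> C (0,y) = (Some False, Some True)" using I unfolding Inv_def by blast
lemma I1d: "x < 0 \<Longrightarrow> fst (C (x, nn \<alpha>)) = Some False" using I unfolding Inv_def by blast
lemma I2: "is_defined (C (x,y)) \<Longrightarrow> \<not> init \<alpha> x y \<Longrightarrow> normal C x y \<or> termc C x y"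
  using I unfolding Inv_def by blast
lemma I3: "fst (C (x,y)) \<noteq> None \<Longrightarrow> y < nn \<alpha> \<Longrightarrow> \<not> init \<alpha> x y \<Longrightarrow>
      is_defined (C (x,y+1)) \<and>
      (is_defined (C (x+1,y+1)) \<longrightarrow> fst (C (x,y)) = Some (par (C (x,y+1)) (C (x+1,y+1)))) \<and>
      (is_defined (C (x+1,y+1)) \<or> termc C x y)"
  using I unfolding Inv_def by blast
lemma I4: "is_defined (C (x,y+1)) \<Longrightarrow> is_defined (C (x+1,y+1)) \<Longrightarrow> fst (C (x,y)) \<noteq> None"
  using I unfolding Inv_def by blast

lemma nofire_pos: "x > 0 \<or> y > nn \<alpha> \<Longrightarrow> \<not> fire C x y"
proof
  assume a: "x > 0 \<or> y > nn \<alpha>" and f: "fire C x y"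
  then have c: "C (x-1,y) = (Some True, None)" by (simp add: fire_def)
  show False
  proof (cases "y > nn \<alpha> \<or> x - 1 > 0")
    case True then show ?thesis using I1[of y "x-1"] c by simp
  next
    case False
    then have x: "x = 1" "y \<le> nn \<alpha>" using a by auto
    show ?thesis
    proof (cases "y \<le> 0")
      case True then show ?thesis using I1c[of y] c x by auto
    next
      case False
      then have "init \<alpha> 0 y" using x by (simp add: init_def)
      then show ?thesis using I1b[of y] c x enc_defined[of \<alpha> "nat (y-1)"] by (simp add: is_defined_def)
    qed
  qed
qed

lemma nl_pos: "x > 0 \<or> y > nn \<alpha> \<Longrightarrow> nonlocal_step C (x,y) = (None,None)"
  using nofire_pos I1 by (auto simp: nl_eq)

lemma Fpos: "x > 0 \<or> y > nn \<alpha> \<Longrightarrow> F C (x,y) = (None,None)"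
proof -
  assume a: "x > 0 \<or> y > nn \<alpha>"
  have c: "C (x,y) = (None,None)" using I1 a by auto
  have "\<not> half_defined (nonlocal_step C (x,y+1))"
    using nl_pos[of x "y+1"] a by (auto simp: half_defined_def)
  then show ?thesis using G8[of C x y] c nofire_pos[OF a] by (auto simp: half_defined_def)
qed

lemma TL:
  assumes w: "fst (C (x-1,y)) = Some True"
    and u: "C (x,y) = (Some False, Some True) \<or> zl (C (x,y))"
    and e: "\<forall>x'>x. zl (C (x',y))"
    and x': "x' > x"
  shows "zl (F C (x',y))"
proof -
  have nf: "\<not> fire C x' y"
  proof
    assume "fire C x' y"
    then have "C (x'-1,y) = (Some True, None)" by (simp add: fire_def)
    moreover have "C (x'-1,y) = (Some False, Some True) \<or> zl (C (x'-1,y))"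
      using u e x' by (cases "x'-1 = x") auto
    ultimately show False by (auto simp: zl_def)
  qed
  have z: "zl (C (x',y))" using e x' by auto
  have nl: "nonlocal_step C (x',y) = C (x',y)" using nf by (simp add: nl_eq)
  have nd1: "\<not> is_defined (nonlocal_step C (x'+1,y))"
  proof
    assume "is_defined (nonlocal_step C (x'+1,y))"
    from G6[OF this] show False
    proof
      assume "is_defined (C (x'+1,y))" then show False using e x' zl_nd by auto
    next
      assume "fire C (x'+1) y" then have "C (x',y) = (Some True, None)" by (simp add: fire_def)
      then show False using z by (simp add: zl_def)
    qed
  qed
  have nr2: "\<not> (half_defined (nonlocal_step C (x',y+1)) \<and> is_defined (nonlocal_step C (x'+1,y+1)))"
  proof
    assume h: "half_defined (nonlocal_step C (x',y+1)) \<and> is_defined (nonlocal_step C (x'+1,y+1))"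
    then have hc: "half_defined (C (x',y+1))" using G7 by metis
    have xle: "x' \<le> 0"
    proof (rule ccontr)
      assume "\<not> x' \<le> 0" then have "C (x',y+1) = (None,None)" using I1 by auto
      then show False using hc by (simp add: half_defined_def)
    qed
    have yl: "y < nn \<alpha>"
    proof (rule ccontr)
      assume "\<not> y < nn \<alpha>"
      then consider "y > nn \<alpha>" | "y = nn \<alpha>" by linarith
      then show False
      proof cases
        case 1 then show ?thesis using I1[of y "x-1"] w by simp
      next
        case 2 then show ?thesis using I1d[of "x-1"] w xle x' by simp
      qed
    qed
    have ni: "\<not> init \<alpha> (x-1) y" using xle x' by (simp add: init_def)
    from I3[OF _ yl ni] w have "is_defined (C (x,y+1)) \<or> termc C (x-1) y" by auto
    then have d0: "is_defined (C (x,y+1))" using w by (auto simp: termc_def)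
    have "\<not> is_defined (C (x',y+1))" using hc by (simp add: half_defined_def is_defined_def)
    then obtain b where b: "x \<le> b" "b < x'" "is_defined (C (b,y+1))" "\<not> is_defined (C (b+1,y+1))"
      using ivt[of "\<lambda>b. is_defined (C (b,y+1))" x x'] d0 x' by auto
    have nib: "\<not> init \<alpha> b (y+1)" using b xle by (auto simp: init_def)
    from I2[OF b(3) nib] b(4) have "termc C b (y+1)" by (auto simp: normal_def)
    then have ez: "\<forall>x''>b. zl (C (x'',y+1))" by (simp add: termc_def)
    have "is_defined (C (x'+1,y+1)) \<or> fire C (x'+1) (y+1)" using G6 h by blast
    then show False
    proof
      assume "is_defined (C (x'+1,y+1))" then show False using ez b zl_nd by auto
    next
      assume "fire C (x'+1) (y+1)" then have "C (x',y+1) = (Some True, None)" by (simp add: fire_def)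
      then show False using ez b by (auto simp: zl_def)
    qed
  qed
  show ?thesis using G8[of C x' y] nf nd1 nr2 z by auto
qed

lemma termc_pers: "termc C x y \<Longrightarrow> termc (F C) x y"
proof -
  assume t: "termc C x y"
  then have d: "is_defined (C (x,y))" by (simp add: termc_def is_defined_def)
  show ?thesis using t TL[of x y] G3[of C x y, OF d] G4[of C "x-1" y] unfolding termc_def by auto
qed

lemma fire_termc: "fire C x y \<Longrightarrow> termc (F C) x y"
proof -
  assume f: "fire C x y"
  have e: "\<forall>x'>x. zl (C (x',y))"
  proof (intro allI impI)
    fix x' :: int assume "x' > x"
    then have "zl (C (x + (x'-x), y))" using f unfolding fire_def by (metis zle_diff1_eq int_one_le_iff_zero_less diff_gt_0_iff_gt)
    then show "zl (C (x',y))" by simp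
  qed
  have w: "fst (C (x-1,y)) = Some True" using f by (simp add: fire_def)
  show ?thesis using f G5[OF f] G4[of C "x-1" y] w TL[of x y] e unfolding termc_def fire_def by auto
qed

lemma east_undef: "is_defined (C (x,y)) \<Longrightarrow> \<not> is_defined (C (x+1,y)) \<Longrightarrow> \<not> is_defined (F C (x+1,y))"
proof -
  assume d: "is_defined (C (x,y))" and nd: "\<not> is_defined (C (x+1,y))"
  show ?thesis
  proof (cases "init \<alpha> x y")
    case True then have "x + 1 > 0" by (simp add: init_def)
    then show ?thesis using Fpos by (simp add: is_defined_def)
  next
    case False
    from I2[OF d False] nd have "termc C x y" by (auto simp: normal_def)
    then have "termc (F C) x y" by (rule termc_pers)
    then show ?thesis using zl_nd by (auto simp: termc_def)
  qed
qed

end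




context
  fixes \<alpha> :: "nat list" and C :: config
  assumes I: "Inv \<alpha> C"
begin

lemma P0: "fst (F C u) = None \<Longrightarrow> snd (F C u) = None"
proof -
  assume a: "fst (F C u) = None"
  obtain x y where u: "u = (x,y)" by (cases u)
  show ?thesis using G8[of C x y] a I0[OF I, of u] unfolding u by (auto simp: half_defined_def)
qed

lemma P1: "y > nn \<alpha> \<or> x > 0 \<Longrightarrow> F C (x,y) = (None,None)"
  using Fpos[OF I] by auto

lemma P2: "init \<alpha> 0 y \<Longrightarrow> F C (0,y) = enc_digit \<alpha> (nat (y-1))"
  using I1b[OF I] G3 enc_defined by metis

lemma P3: "y \<le> 0 \<Longrightarrow> F C (0,y) = (None,None) \<or> F C (0,y) = (Some False, Some True)"
proof -
  assume y: "y \<le> 0"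
  from I1c[OF I y] show ?thesis
  proof
    assume c: "C (0,y) = (None,None)"
    have "\<not> is_defined (nonlocal_step C (0+1,y+1))" using nl_pos[OF I, of 1 "y+1"] by (simp add: is_defined_def)
    then show ?thesis using G8[of C 0 y] c by (auto simp: half_defined_def)
  next
    assume c: "C (0,y) = (Some False, Some True)"
    then have "is_defined (C (0,y))" by (simp add: is_defined_def)
    then show ?thesis using G3 c by metis
  qed
qed

lemma P4: "x < 0 \<Longrightarrow> fst (F C (x, nn \<alpha>)) = Some False"
  using I1d[OF I] G4 by (metis option.distinct(1))

lemma P5: "is_defined (F C (x,y)) \<Longrightarrow> \<not> init \<alpha> x y \<Longrightarrow> normal (F C) x y \<or> termc (F C) x y"
proof -
  assume d: "is_defined (F C (x,y))" and ni: "\<not> init \<alpha> x y"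
  show ?thesis
  proof (cases "is_defined (C (x,y))")
    case True
    from I2[OF I True ni] show ?thesis
    proof
      assume n: "normal C x y"
      then have "is_defined (C (x+1,y))" by (simp add: normal_def)
      then have "F C (x+1,y) = C (x+1,y)" using G3 by metis
      moreover have "F C (x,y) = C (x,y)" using G3 True by metis
      ultimately show ?thesis using n by (simp add: normal_def)
    next
      assume "termc C x y" then show ?thesis using termc_pers[OF I] by blast
    qed
  next
    case False
    have "fire C x y \<or> (\<not> fire C x y \<and> half_defined (C (x,y)) \<and> is_defined (nonlocal_step C (x+1,y)) \<and>
      F C (x,y) = (fst (C (x,y)), Some (maj (C (x,y)) (nonlocal_step C (x+1,y)))))"
      using G8[of C x y] d False by (auto simp: half_defined_def is_defined_def)
    then show ?thesis
    proof
      assume "fire C x y" then show ?thesis using fire_termc[OF I] by blast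
    next
      assume r: "\<not> fire C x y \<and> half_defined (C (x,y)) \<and> is_defined (nonlocal_step C (x+1,y)) \<and>
        F C (x,y) = (fst (C (x,y)), Some (maj (C (x,y)) (nonlocal_step C (x+1,y))))"
      then have e: "F C (x+1,y) = nonlocal_step C (x+1,y)" using G2 by metis
      show ?thesis using r e unfolding normal_def maj_def by auto
    qed
  qed
qed

lemma P6: "fst (F C (x,y)) \<noteq> None \<Longrightarrow> y < nn \<alpha> \<Longrightarrow> \<not> init \<alpha> x y \<Longrightarrow>
      is_defined (F C (x,y+1)) \<and>
      (is_defined (F C (x+1,y+1)) \<longrightarrow> fst (F C (x,y)) = Some (par (F C (x,y+1)) (F C (x+1,y+1)))) \<and>
      (is_defined (F C (x+1,y+1)) \<or> termc (F C) x y)"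
proof -
  assume f: "fst (F C (x,y)) \<noteq> None" and yl: "y < nn \<alpha>" and ni: "\<not> init \<alpha> x y"
  show ?thesis
  proof (cases "fst (C (x,y)) = None")
    case False
    note i3 = I3[OF I False yl ni]
    then have dC: "is_defined (C (x,y+1))" by blast
    have e1: "F C (x,y+1) = C (x,y+1)" using G3 dC by metis
    have e0: "fst (F C (x,y)) = fst (C (x,y))" using G4 False by metis
    show ?thesis
    proof (cases "is_defined (C (x+1,y+1))")
      case True
      have "F C (x+1,y+1) = C (x+1,y+1)" using G3 True by metis
      then show ?thesis using i3 e1 e0 dC True by auto
    next
      case nd: False
      then have t: "termc C x y" using i3 by blast
      have "\<not> is_defined (F C (x+1,y+1))" using east_undef[OF I dC nd] .
      then show ?thesis using termc_pers[OF I t] e1 dC by auto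
    qed
  next
    case True
    then have c: "C (x,y) = (None,None)" using I0[OF I, of "(x,y)"] by (cases "C (x,y)") auto
    have "fire C x y \<or> (\<not> fire C x y \<and> half_defined (nonlocal_step C (x,y+1)) \<and>
      is_defined (nonlocal_step C (x+1,y+1)) \<and>
      F C (x,y) = (Some (par (nonlocal_step C (x,y+1)) (nonlocal_step C (x+1,y+1))), None))"
      using G8[of C x y] c f by (auto simp: half_defined_def)
    then show ?thesis
    proof
      assume fi: "fire C x y"
      then have w: "C (x-1,y) = (Some True, None)" by (simp add: fire_def)
      have niw: "\<not> init \<alpha> (x-1) y"
      proof
        assume "init \<alpha> (x-1) y"
        then have "C (x-1,y) = enc_digit \<alpha> (nat (y-1))" using I1b[OF I] by (simp add: init_def)
        then show False using w enc_defined by (metis is_defined_def option.distinct(1) snd_conv)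
      qed
      have "is_defined (C (x-1+1,y+1)) \<or> termc C (x-1) y"
        using I3[OF I _ yl niw] w by simp
      then have dC: "is_defined (C (x,y+1))" using w by (auto simp: termc_def)
      have nd: "\<not> is_defined (C (x+1,y+1))" using I4[OF I dC] True by blast
      have "\<not> is_defined (F C (x+1,y+1))" using east_undef[OF I dC nd] .
      moreover have "is_defined (F C (x,y+1))" using G3 dC by metis
      ultimately show ?thesis using fire_termc[OF I fi] by auto
    next
      assume r: "\<not> fire C x y \<and> half_defined (nonlocal_step C (x,y+1)) \<and>
        is_defined (nonlocal_step C (x+1,y+1)) \<and>
        F C (x,y) = (Some (par (nonlocal_step C (x,y+1)) (nonlocal_step C (x+1,y+1))), None)"
      then have e2: "F C (x+1,y+1) = nonlocal_step C (x+1,y+1)" using G2 by metis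
      have e1: "F C (x,y+1) = (fst (nonlocal_step C (x,y+1)), Some (maj (nonlocal_step C (x,y+1)) (nonlocal_step C (x+1,y+1))))"
        using G9 r by metis
      show ?thesis using r e1 e2 by (auto simp: is_defined_def half_defined_def par_def)
    qed
  qed
qed

lemma P7: "is_defined (F C (x,y+1)) \<Longrightarrow> is_defined (F C (x+1,y+1)) \<Longrightarrow> fst (F C (x,y)) \<noteq> None"
proof -
  assume d1: "is_defined (F C (x,y+1))" and d2: "is_defined (F C (x+1,y+1))"
  show ?thesis
  proof (cases "fst (C (x,y)) = None")
    case False then show ?thesis using G4 by metis
  next
    case True
    then have c: "C (x,y) = (None,None)" using I0[OF I, of "(x,y)"] by (cases "C (x,y)") auto
    show ?thesis
    proof (cases "is_defined (C (x,y+1))")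
      case dC: True
      show ?thesis
      proof (cases "is_defined (C (x+1,y+1))")
        case True then show ?thesis using I4[OF I dC] c by simp
      next
        case False then show ?thesis using east_undef[OF I dC] d2 by blast
      qed
    next
      case ndC: False
      have "fire C x (y+1) \<or> (\<not> fire C x (y+1) \<and> half_defined (C (x,y+1)) \<and> is_defined (nonlocal_step C (x+1,y+1)))"
        using G8[of C x "y+1"] d1 ndC by (auto simp: half_defined_def is_defined_def)
      then show ?thesis
      proof
        assume "fire C x (y+1)"
        then have "termc (F C) x (y+1)" using fire_termc[OF I] by blast
        then show ?thesis using d2 zl_nd by (auto simp: termc_def)
      next
        assume r: "\<not> fire C x (y+1) \<and> half_defined (C (x,y+1)) \<and> is_defined (nonlocal_step C (x+1,y+1))"
        then have h: "half_defined (nonlocal_step C (x,y+1))" by (simp add: nl_eq)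
        show ?thesis
        proof (cases "fire C x y")
          case True then show ?thesis using G5 by simp
        next
          case False
          show ?thesis using G10[OF False c h] r by simp
        qed
      qed
    qed
  qed
qed

lemma Inv_F: "Inv \<alpha> (F C)"
proof -
  have A: "\<forall>u. fst (F C u) = None \<longrightarrow> snd (F C u) = None" using P0 by blast
  have B: "\<forall>x y. (y > nn \<alpha> \<or> x > 0) \<longrightarrow> F C (x,y) = (None,None)" using P1 by blast
  have C: "\<forall>y. init \<alpha> 0 y \<longrightarrow> F C (0,y) = enc_digit \<alpha> (nat (y-1))" using P2 by blast
  have D: "\<forall>y\<le>0. F C (0,y) = (None,None) \<or> F C (0,y) = (Some False, Some True)" using P3 by blast
  have E: "\<forall>x<0. fst (F C (x, nn \<alpha>)) = Some False" using P4 by blast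
  have G: "\<forall>x y. is_defined (F C (x,y)) \<and> \<not> init \<alpha> x y \<longrightarrow> normal (F C) x y \<or> termc (F C) x y"
    using P5 by blast
  have H: "\<forall>x y. fst (F C (x,y)) \<noteq> None \<and> y < nn \<alpha> \<and> \<not> init \<alpha> x y \<longrightarrow>
      is_defined (F C (x,y+1)) \<and>
      (is_defined (F C (x+1,y+1)) \<longrightarrow> fst (F C (x,y)) = Some (par (F C (x,y+1)) (F C (x+1,y+1)))) \<and>
      (is_defined (F C (x+1,y+1)) \<or> termc (F C) x y)"
  proof (intro allI impI)
    fix x y assume "fst (F C (x,y)) \<noteq> None \<and> y < nn \<alpha> \<and> \<not> init \<alpha> x y"
    then show "is_defined (F C (x,y+1)) \<and>
      (is_defined (F C (x+1,y+1)) \<longrightarrow> fst (F C (x,y)) = Some (par (F C (x,y+1)) (F C (x+1,y+1)))) \<and>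
      (is_defined (F C (x+1,y+1)) \<or> termc (F C) x y)" using P6 by blast
  qed
  have K: "\<forall>x y. is_defined (F C (x,y+1)) \<and> is_defined (F C (x+1,y+1)) \<longrightarrow> fst (F C (x,y)) \<noteq> None"
    using P7 by blast
  show ?thesis unfolding Inv_def by (intro conjI A B C D E G H K)
qed

end

lemma enc_fst[simp]: "fst (enc_digit \<alpha> i) = None \<longleftrightarrow> False"
  and enc_snd[simp]: "snd (enc_digit \<alpha> i) = None \<longleftrightarrow> False"
  using enc_defined[of \<alpha> i] by (auto simp: is_defined_def)

lemma c0_eq: "c0 \<alpha> (x::int,y) = (if init \<alpha> x y then enc_digit \<alpha> (nat (y - 1))
     else if x < 0 \<and> y = nn \<alpha> then (Some False, None) else (None, None))"
  by (simp add: c0_def init_def)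

lemma c0_def_init: "is_defined (c0 \<alpha> (x::int,y)) \<Longrightarrow> init \<alpha> x y"
  by (auto simp: c0_eq is_defined_def split: if_splits)

lemma c0_fst: "fst (c0 \<alpha> (x::int,y)) \<noteq> None \<Longrightarrow> init \<alpha> x y \<or> (x < 0 \<and> y = nn \<alpha>)"
  by (auto simp: c0_eq split: if_splits)

lemma Inv_c0: "Inv \<alpha> (c0 \<alpha>)"
proof -
  have A: "\<forall>u. fst (c0 \<alpha> u) = None \<longrightarrow> snd (c0 \<alpha> u) = None"
  proof (intro allI impI)
    fix u assume "fst (c0 \<alpha> u) = None" then show "snd (c0 \<alpha> u) = None"
      by (cases u) (auto simp: c0_eq split: if_splits)
  qed
  have B: "\<forall>x y. (y > nn \<alpha> \<or> x > 0) \<longrightarrow> c0 \<alpha> (x,y) = (None,None)" by (auto simp: c0_eq init_def)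
  have C: "\<forall>y. init \<alpha> 0 y \<longrightarrow> c0 \<alpha> (0,y) = enc_digit \<alpha> (nat (y-1))" by (simp add: c0_eq)
  have D: "\<forall>y\<le>0. c0 \<alpha> (0,y) = (None,None) \<or> c0 \<alpha> (0,y) = (Some False, Some True)"
    by (simp add: c0_eq init_def)
  have E: "\<forall>x<0. fst (c0 \<alpha> (x, nn \<alpha>)) = Some False" by (simp add: c0_eq init_def)
  have G: "\<forall>x y. is_defined (c0 \<alpha> (x,y)) \<and> \<not> init \<alpha> x y \<longrightarrow> normal (c0 \<alpha>) x y \<or> termc (c0 \<alpha>) x y"
    using c0_def_init by blast
  have H: "\<forall>x y. \<not> (fst (c0 \<alpha> (x,y)) \<noteq> None \<and> y < nn \<alpha> \<and> \<not> init \<alpha> x y)"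
    using c0_fst by fastforce
  have K: "\<forall>x y. \<not> (is_defined (c0 \<alpha> (x,y+1)) \<and> is_defined (c0 \<alpha> (x+1,y+1)))"
  proof (intro allI notI)
    fix x y :: int assume "is_defined (c0 \<alpha> (x,y+1)) \<and> is_defined (c0 \<alpha> (x+1,y+1))"
    then have "init \<alpha> x (y+1)" "init \<alpha> (x+1) (y+1)" using c0_def_init by blast+
    then show False by (simp add: init_def)
  qed
  have H': "\<forall>x y. fst (c0 \<alpha> (x,y)) \<noteq> None \<and> y < nn \<alpha> \<and> \<not> init \<alpha> x y \<longrightarrow>
      is_defined (c0 \<alpha> (x,y+1)) \<and>
      (is_defined (c0 \<alpha> (x+1,y+1)) \<longrightarrow> fst (c0 \<alpha> (x,y)) = Some (par (c0 \<alpha> (x,y+1)) (c0 \<alpha> (x+1,y+1)))) \<and>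
      (is_defined (c0 \<alpha> (x+1,y+1)) \<or> termc (c0 \<alpha>) x y)" using H by blast
  have K': "\<forall>x y. is_defined (c0 \<alpha> (x,y+1)) \<and> is_defined (c0 \<alpha> (x+1,y+1)) \<longrightarrow> fst (c0 \<alpha> (x,y)) \<noteq> None"
    using K by blast
  show ?thesis unfolding Inv_def by (intro conjI A B C D E G H' K')
qed

definition Ct :: "nat list \<Rightarrow> nat \<Rightarrow> config" where
  "Ct \<alpha> t = (F ^^ t) (c0 \<alpha>)"

lemma Ct_Suc: "Ct \<alpha> (Suc t) = F (Ct \<alpha> t)" by (simp add: Ct_def)

lemma Inv_Ct: "Inv \<alpha> (Ct \<alpha> t)"
proof (induction t)
  case 0 then show ?case by (simp add: Ct_def Inv_c0)
next
  case (Suc t) then show ?case unfolding Ct_Suc by (rule Inv_F)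
qed




lemma Ct_0: "Ct \<alpha> 0 = c0 \<alpha>" by (simp add: Ct_def)

lemma Ct_add: "Ct \<alpha> (t + Suc k) = F (Ct \<alpha> (t + k))"
  by (simp add: Ct_Suc[symmetric])

lemma rank_mono_k: "rank (Ct \<alpha> t u) \<le> rank (Ct \<alpha> (t+k) u) \<and>
   (Ct \<alpha> (t+k) u \<noteq> Ct \<alpha> t u \<longrightarrow> rank (Ct \<alpha> t u) < rank (Ct \<alpha> (t+k) u))"
proof (induction k)
  case 0 then show ?case by simp
next
  case (Suc k)
  have s: "rank (Ct \<alpha> (t+k) u) \<le> rank (Ct \<alpha> (t + Suc k) u) \<and>
     (Ct \<alpha> (t + Suc k) u \<noteq> Ct \<alpha> (t+k) u \<longrightarrow> rank (Ct \<alpha> (t+k) u) < rank (Ct \<alpha> (t + Suc k) u))"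
    unfolding Ct_add by (rule rank_step)
  show ?case
  proof (cases "Ct \<alpha> (t + Suc k) u = Ct \<alpha> (t+k) u")
    case True then show ?thesis using Suc.IH by simp
  next
    case False
    then have "rank (Ct \<alpha> (t+k) u) < rank (Ct \<alpha> (t + Suc k) u)" using s by blast
    then show ?thesis using Suc.IH by auto
  qed
qed

lemma nat_aux1: "(x::nat) < y \<Longrightarrow> y \<le> 2 \<Longrightarrow> 2 - x \<le> 0 \<Longrightarrow> False" by presburger
lemma nat_aux2: "(x::nat) < y \<Longrightarrow> y \<le> 2 \<Longrightarrow> 2 - x \<le> Suc m \<Longrightarrow> 2 - y \<le> m" by presburger

lemma settle_from_m: "\<forall>t0. 2 - rank (Ct \<alpha> t0 u) \<le> m \<longrightarrow> (\<exists>T\<ge>t0. \<forall>t\<ge>T. Ct \<alpha> t u = Ct \<alpha> T u)"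
proof (induction m)
  case 0
  show ?case
  proof (intro allI impI)
    fix t0 assume a: "2 - rank (Ct \<alpha> t0 u) \<le> 0"
    have H: "Ct \<alpha> t u = Ct \<alpha> t0 u" if "t \<ge> t0" for t
    proof (rule ccontr)
      assume "Ct \<alpha> t u \<noteq> Ct \<alpha> t0 u"
      then have "rank (Ct \<alpha> t0 u) < rank (Ct \<alpha> (t0 + (t - t0)) u)"
        using rank_mono_k[of \<alpha> t0 u "t - t0"] that by simp
      then show False using nat_aux1[OF _ rank_le2 a] by blast
    qed
    show "\<exists>T\<ge>t0. \<forall>t\<ge>T. Ct \<alpha> t u = Ct \<alpha> T u"
      apply (rule exI[of _ t0])
      apply (intro conjI allI impI order_refl)
      apply (erule H)
      done
  qed
next
  case (Suc m)
  show ?case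
  proof (intro allI impI)
    fix t0 assume a: "2 - rank (Ct \<alpha> t0 u) \<le> Suc m"
    show "\<exists>T\<ge>t0. \<forall>t\<ge>T. Ct \<alpha> t u = Ct \<alpha> T u"
    proof (cases "\<forall>t\<ge>t0. Ct \<alpha> t u = Ct \<alpha> t0 u")
      case True then show ?thesis by (intro exI[of _ t0] conjI order_refl)
    next
      case False
      then obtain t1 where t1: "t1 \<ge> t0" "Ct \<alpha> t1 u \<noteq> Ct \<alpha> t0 u" by blast
      have "rank (Ct \<alpha> t0 u) < rank (Ct \<alpha> (t0 + (t1 - t0)) u)"
        using rank_mono_k[of \<alpha> t0 u "t1 - t0"] t1 by simp
      then have r: "rank (Ct \<alpha> t0 u) < rank (Ct \<alpha> t1 u)" using t1 by simp
      have "2 - rank (Ct \<alpha> t1 u) \<le> m" using nat_aux2[OF r rank_le2 a] .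
      then have ex: "\<exists>T\<ge>t1. \<forall>t\<ge>T. Ct \<alpha> t u = Ct \<alpha> T u" by (rule Suc.IH[rule_format])
      then obtain T where T: "T \<ge> t1 \<and> (\<forall>t\<ge>T. Ct \<alpha> t u = Ct \<alpha> T u)" ..
      have "T \<ge> t0" using conjunct1[OF T] t1(1) by (rule order_trans[rotated])
      then show ?thesis using conjunct2[OF T] by (intro exI[of _ T] conjI)
    qed
  qed
qed

lemma settle_from: "\<exists>T\<ge>t0. \<forall>t\<ge>T. Ct \<alpha> t u = Ct \<alpha> T u"
  using settle_from_m[of \<alpha> u "2 - rank (Ct \<alpha> t0 u)"] by (meson order_refl)

lemma c_inf_eq: "\<forall>t\<ge>T. Ct \<alpha> t u = v \<Longrightarrow> c_inf \<alpha> u = v"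
  unfolding c_inf_def
proof (rule the_equality)
  assume "\<forall>t\<ge>T. Ct \<alpha> t u = v"
  then show "\<exists>n0. \<forall>n\<ge>n0. (F ^^ n) (c0 \<alpha>) u = v" by (auto simp: Ct_def)
next
  fix w assume a: "\<forall>t\<ge>T. Ct \<alpha> t u = v" and "\<exists>n0. \<forall>n\<ge>n0. (F ^^ n) (c0 \<alpha>) u = w"
  then obtain n0 where "\<forall>n\<ge>n0. Ct \<alpha> n u = w" by (auto simp: Ct_def)
  then show "w = v" using a by (metis le_add1 le_add2)
qed

lemma settle: "\<exists>T. \<forall>t\<ge>T. Ct \<alpha> t u = c_inf \<alpha> u"
proof -
  obtain T where H: "\<forall>t\<ge>T. Ct \<alpha> t u = Ct \<alpha> T u" using settle_from by blast
  have c: "c_inf \<alpha> u = Ct \<alpha> T u" using H by (rule c_inf_eq)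
  show ?thesis
    apply (rule exI[of _ T])
    apply (intro allI impI)
    apply (subst c)
    apply (erule H[rule_format])
    done
qed

lemma def_stay: "is_defined (Ct \<alpha> t (x,y)) \<Longrightarrow> Ct \<alpha> (t+k) (x,y) = Ct \<alpha> t (x,y)"
proof (induction k)
  case 0 then show ?case by simp
next
  case (Suc k)
  then show ?case using G3[of "Ct \<alpha> (t+k)" x y] by (simp add: Ct_Suc)
qed

lemma fst_stay: "fst (Ct \<alpha> t (x,y)) \<noteq> None \<Longrightarrow> fst (Ct \<alpha> (t+k) (x,y)) = fst (Ct \<alpha> t (x,y))"
proof (induction k)
  case 0 then show ?case by simp
next
  case (Suc k) then show ?case unfolding Ct_add using G4 by metis
qed

lemma termc_stay: "termc (Ct \<alpha> t) x y \<Longrightarrow> termc (Ct \<alpha> (t+k)) x y"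
proof (induction k)
  case 0 then show ?case by simp
next
  case (Suc k)
  then show ?case using termc_pers[OF Inv_Ct[of \<alpha> "t+k"]] by (simp add: Ct_Suc)
qed

lemma def_perm: "is_defined (Ct \<alpha> t (x,y)) \<Longrightarrow> c_inf \<alpha> (x,y) = Ct \<alpha> t (x,y)"
  by (rule c_inf_eq[of t]) (metis def_stay le_add_diff_inverse)

lemma fst_perm: "fst (Ct \<alpha> t (x,y)) \<noteq> None \<Longrightarrow> fst (c_inf \<alpha> (x,y)) = fst (Ct \<alpha> t (x,y))"
proof -
  assume a: "fst (Ct \<alpha> t (x,y)) \<noteq> None"
  obtain T where T: "\<forall>t'\<ge>T. Ct \<alpha> t' (x,y) = c_inf \<alpha> (x,y)" using settle by blast
  have "Ct \<alpha> (t + T) (x,y) = c_inf \<alpha> (x,y)" using T by simp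
  then show ?thesis using fst_stay[OF a, of T] by simp
qed

abbreviation L :: "nat list \<Rightarrow> config" where "L \<equiv> c_inf"

lemma LF0: "init \<alpha> 0 y \<Longrightarrow> L \<alpha> (0,y) = enc_digit \<alpha> (nat (y-1))"
  using def_perm[of \<alpha> 0 0 y] I1b[OF Inv_Ct[of \<alpha> 0]] enc_defined by metis

lemma LF1: "y > nn \<alpha> \<or> x > 0 \<Longrightarrow> L \<alpha> (x,y) = (None,None)"
  by (rule c_inf_eq[of 0]) (auto intro: I1[OF Inv_Ct])

lemma LF2: "x < 0 \<Longrightarrow> fst (L \<alpha> (x, nn \<alpha>)) = Some False"
  using fst_perm[of \<alpha> 0 x "nn \<alpha>"] I1d[OF Inv_Ct[of \<alpha> 0]] by simp

lemma LF_I0: "fst (L \<alpha> u) = None \<Longrightarrow> snd (L \<alpha> u) = None"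
proof -
  assume a: "fst (L \<alpha> u) = None"
  obtain T where "\<forall>t\<ge>T. Ct \<alpha> t u = c_inf \<alpha> u" using settle by blast
  then have "Ct \<alpha> T u = L \<alpha> u" by simp
  then show ?thesis using I0[OF Inv_Ct[of \<alpha> T]] a by metis
qed

lemma settle3: "\<exists>T. Ct \<alpha> T u = L \<alpha> u \<and> Ct \<alpha> T v = L \<alpha> v \<and> Ct \<alpha> T w = L \<alpha> w"
proof -
  obtain T1 where 1: "\<forall>t\<ge>T1. Ct \<alpha> t u = c_inf \<alpha> u" using settle by blast
  obtain T2 where 2: "\<forall>t\<ge>T2. Ct \<alpha> t v = c_inf \<alpha> v" using settle by blast
  obtain T3 where 3: "\<forall>t\<ge>T3. Ct \<alpha> t w = c_inf \<alpha> w" using settle by blast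
  show ?thesis using 1 2 3 by (intro exI[of _ "T1+T2+T3"]) auto
qed

lemma LF3: "is_defined (L \<alpha> (x,y)) \<Longrightarrow> \<not> init \<alpha> x y \<Longrightarrow>
   (is_defined (L \<alpha> (x+1,y)) \<and> snd (L \<alpha> (x,y)) = Some (maj (L \<alpha> (x,y)) (L \<alpha> (x+1,y)))) \<or>
   (\<forall>x'>x. \<not> is_defined (L \<alpha> (x',y)))"
proof -
  assume d: "is_defined (L \<alpha> (x,y))" and ni: "\<not> init \<alpha> x y"
  obtain T where T: "Ct \<alpha> T (x,y) = L \<alpha> (x,y)" "Ct \<alpha> T (x+1,y) = L \<alpha> (x+1,y)"
    using settle3[of \<alpha> "(x,y)" "(x+1,y)" "(x,y)"] by blast
  have "normal (Ct \<alpha> T) x y \<or> termc (Ct \<alpha> T) x y" using I2[OF Inv_Ct[of \<alpha> T], of x y] d ni T by simp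
  then show ?thesis
  proof
    assume "normal (Ct \<alpha> T) x y" then show ?thesis using T by (simp add: normal_def)
  next
    assume tc: "termc (Ct \<alpha> T) x y"
    have "\<not> is_defined (L \<alpha> (x',y))" if x': "x' > x" for x'
    proof
      assume dx: "is_defined (L \<alpha> (x',y))"
      obtain T' where T': "\<forall>t\<ge>T'. Ct \<alpha> t (x',y) = c_inf \<alpha> (x',y)" using settle by blast
      have "termc (Ct \<alpha> (T + T')) x y" using termc_stay[OF tc] by blast
      then have "zl (Ct \<alpha> (T+T') (x',y))" using x' by (simp add: termc_def)
      moreover have "Ct \<alpha> (T+T') (x',y) = L \<alpha> (x',y)" using T' by simp
      ultimately show False using dx zl_nd by metis
    qed
    then show ?thesis by blast
  qed
qed

lemma LF4: "fst (L \<alpha> (x,y)) \<noteq> None \<Longrightarrow> y < nn \<alpha> \<Longrightarrow> \<not> init \<alpha> x y \<Longrightarrow>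
   is_defined (L \<alpha> (x,y+1)) \<and>
   (is_defined (L \<alpha> (x+1,y+1)) \<longrightarrow> fst (L \<alpha> (x,y)) = Some (par (L \<alpha> (x,y+1)) (L \<alpha> (x+1,y+1))))"
proof -
  assume a: "fst (L \<alpha> (x,y)) \<noteq> None" "y < nn \<alpha>" "\<not> init \<alpha> x y"
  obtain T where T: "Ct \<alpha> T (x,y) = L \<alpha> (x,y)" "Ct \<alpha> T (x,y+1) = L \<alpha> (x,y+1)" "Ct \<alpha> T (x+1,y+1) = L \<alpha> (x+1,y+1)"
    using settle3 by blast
  have f: "fst (Ct \<alpha> T (x,y)) \<noteq> None" using a T by simp
  note r = I3[OF Inv_Ct[of \<alpha> T] f a(2) a(3)]
  then show ?thesis by (simp only: T) blast
qed

lemma LF5: "is_defined (L \<alpha> (x,y+1)) \<Longrightarrow> is_defined (L \<alpha> (x+1,y+1)) \<Longrightarrow> fst (L \<alpha> (x,y)) \<noteq> None"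
proof -
  assume a: "is_defined (L \<alpha> (x,y+1))" "is_defined (L \<alpha> (x+1,y+1))"
  obtain T where T: "Ct \<alpha> T (x,y) = L \<alpha> (x,y)" "Ct \<alpha> T (x,y+1) = L \<alpha> (x,y+1)" "Ct \<alpha> T (x+1,y+1) = L \<alpha> (x+1,y+1)"
    using settle3 by blast
  have "is_defined (Ct \<alpha> T (x,y+1))" "is_defined (Ct \<alpha> T (x+1,y+1))" using a T by simp_all
  from I4[OF Inv_Ct[of \<alpha> T] this] have "fst (Ct \<alpha> T (x,y)) \<noteq> None" .
  then show ?thesis using T(1) by simp
qed

lemma LF6: "fst (L \<alpha> (x,y)) \<noteq> None \<Longrightarrow> is_defined (L \<alpha> (x+1,y)) \<Longrightarrow> is_defined (L \<alpha> (x,y))"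
proof (rule ccontr)
  assume a: "fst (L \<alpha> (x,y)) \<noteq> None" "is_defined (L \<alpha> (x+1,y))" and nd: "\<not> is_defined (L \<alpha> (x,y))"
  obtain T where T: "\<forall>t\<ge>T. Ct \<alpha> t (x,y) = c_inf \<alpha> (x,y)" "\<forall>t\<ge>T. Ct \<alpha> t (x+1,y) = c_inf \<alpha> (x+1,y)"
  proof -
    obtain T1 where 1: "\<forall>t\<ge>T1. Ct \<alpha> t (x,y) = c_inf \<alpha> (x,y)" using settle by blast
    obtain T2 where 2: "\<forall>t\<ge>T2. Ct \<alpha> t (x+1,y) = c_inf \<alpha> (x+1,y)" using settle by blast
    have "\<forall>t\<ge>T1+T2. Ct \<alpha> t (x,y) = c_inf \<alpha> (x,y)" using 1 by simp
    moreover have "\<forall>t\<ge>T1+T2. Ct \<alpha> t (x+1,y) = c_inf \<alpha> (x+1,y)" using 2 by simp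
    ultimately show ?thesis by (rule that)
  qed
  let ?C = "Ct \<alpha> T"
  have e1: "?C (x,y) = L \<alpha> (x,y)" and e2: "?C (x+1,y) = L \<alpha> (x+1,y)" using T by simp_all
  have fL: "snd (L \<alpha> (x,y)) = None" using a nd by (simp add: is_defined_def)
  have h: "half_defined (?C (x,y))" using e1 a fL by (simp add: half_defined_def)
  have d1: "is_defined (?C (x+1,y))" using e2 a by simp
  have "is_defined (F ?C (x,y))"
  proof (cases "fire ?C x y")
    case True then show ?thesis using G5 by (simp add: is_defined_def)
  next
    case False
    then have "nonlocal_step ?C (x,y) = ?C (x,y)" by (simp add: nl_eq)
    moreover have "nonlocal_step ?C (x+1,y) = ?C (x+1,y)" using G1 d1 by metis
    ultimately show ?thesis using G9[of ?C x y] h d1 by (simp add: half_defined_def is_defined_def)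
  qed
  then have "is_defined (Ct \<alpha> (Suc T) (x,y))" by (simp add: Ct_Suc)
  moreover have "Ct \<alpha> (Suc T) (x,y) = L \<alpha> (x,y)" using T by simp
  ultimately show False using nd by simp
qed




definition W :: "(int \<Rightarrow> nat) \<Rightarrow> int \<Rightarrow> int \<Rightarrow> nat" where
  "W f K x0 = (\<Sum>x\<in>{K..<x0}. f x * 2 ^ nat (x0 - 1 - x))"

lemma W_zero: "W f K K = 0" by (simp add: W_def)

lemma W_step: "K \<le> x0 \<Longrightarrow> W f K (x0+1) = 2 * W f K x0 + f x0"
proof -
  assume k: "K \<le> x0"
  have s: "{K..<x0+1} = insert x0 {K..<x0}" using k by auto
  have "W f K (x0+1) = f x0 + (\<Sum>x\<in>{K..<x0}. f x * 2 ^ nat (x0 - x))"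
    unfolding W_def s by simp
  also have "(\<Sum>x\<in>{K..<x0}. f x * 2 ^ nat (x0 - x)) = (\<Sum>x\<in>{K..<x0}. 2 * (f x * 2 ^ nat (x0 - 1 - x)))"
  proof (rule sum.cong)
    fix x assume "x \<in> {K..<x0}"
    then have "nat (x0 - x) = Suc (nat (x0 - 1 - x))" by auto
    then show "f x * 2 ^ nat (x0 - x) = 2 * (f x * 2 ^ nat (x0 - 1 - x))" by simp
  qed simp
  also have "\<dots> = 2 * W f K x0" by (simp add: W_def sum_distrib_left)
  finally show ?thesis by simp
qed

lemma W_ext_m: "(\<forall>x. K \<le> x \<and> x < K + int m \<longrightarrow> f x = 0) \<Longrightarrow> K + int m \<le> x0 \<Longrightarrow> W f K x0 = W f (K + int m) x0"
proof (induction m arbitrary: K)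
  case 0 then show ?case by simp
next
  case (Suc m)
  have k: "K < x0" using Suc.prems by simp
  have s: "{K..<x0} = insert K {K+1..<x0}" using k by auto
  have fK: "f K = 0" using Suc.prems(1) by simp
  have "W f K x0 = W f (K+1) x0" unfolding W_def s using fK by simp
  also have "\<dots> = W f (K + 1 + int m) x0"
    using Suc.IH[of "K+1"] Suc.prems by simp
  finally show ?case by (simp add: add.assoc)
qed

lemma W_ext: "K \<le> K1 \<Longrightarrow> K1 \<le> x0 \<Longrightarrow> (\<forall>x. K \<le> x \<and> x < K1 \<longrightarrow> f x = 0) \<Longrightarrow> W f K x0 = W f K1 x0"
  using W_ext_m[of K "nat (K1 - K)" f x0] by simp

lemma adder_alg_m:
  assumes ad: "\<forall>x. K \<le> x \<and> x < x0 \<longrightarrow> s' x + 2 * c x = s x + s (x+1) + c (x+1)"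
    and sK: "s K = 0" and cK: "c K = 0"
  shows "K + int m \<le> x0 \<Longrightarrow> W s' K (K + int m) = 3 * W s K (K + int m) + s (K + int m) + c (K + int m)"
proof (induction m)
  case 0 then show ?case using sK cK by (simp add: W_zero)
next
  case (Suc m)
  let ?x = "K + int m"
  have le: "K \<le> ?x" by simp
  have IH: "W s' K ?x = 3 * W s K ?x + s ?x + c ?x" using Suc by simp
  have a: "s' ?x + 2 * c ?x = s ?x + s (?x+1) + c (?x+1)" using ad Suc.prems by simp
  have "W s' K (?x + 1) = 2 * W s' K ?x + s' ?x" by (rule W_step[OF le])
  also have "\<dots> = 3 * (2 * W s K ?x + s ?x) + s (?x+1) + c (?x+1)" using IH a by simp
  also have "\<dots> = 3 * W s K (?x + 1) + s (?x+1) + c (?x+1)" using W_step[OF le, of s] by simp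
  finally have r: "W s' K (?x + 1) = 3 * W s K (?x + 1) + s (?x+1) + c (?x+1)" .
  have e: "K + int (Suc m) = ?x + 1" by simp
  show ?case unfolding e by (rule r)
qed

lemma adder_alg:
  assumes "\<forall>x. K \<le> x \<and> x < x0 \<longrightarrow> s' x + 2 * c x = s x + s (x+1) + c (x+1)"
    and "s K = 0" and "c K = 0" and "K \<le> x0"
  shows "W s' K x0 = 3 * W s K x0 + s x0 + c x0"
  using adder_alg_m[OF assms(1-3), of "nat (x0 - K)"] assms(4) by simp

lemma bitn_le1: "bitn b \<le> 1" by (simp add: bitn_def split: option.splits bool.splits)

lemma bitn_Some: "bitn (Some b) = (if b then 1 else 0)" by (simp add: bitn_def)

lemma bitn_eq: "bitn b = (if b = Some True then 1 else 0)"
  by (simp add: bitn_def split: option.splits bool.splits)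

lemma add_bits: "(S::nat) \<le> 3 \<Longrightarrow> bitn (Some (odd S)) + 2 * bitn (Some (2 \<le> S)) = S"
  by (auto simp: bitn_Some, presburger+)

lemma conv:
  assumes "K \<le> x0" and "\<forall>x<K. g x \<noteq> Some True"
  shows "finite {x. x < x0 \<and> g x = Some True} \<and>
    (\<Sum>x\<in>{x. x < x0 \<and> g x = Some True}. (2::nat) ^ nat (x0 - 1 - x)) = W (\<lambda>x. bitn (g x)) K x0"
proof -
  have e: "{x. x < x0 \<and> g x = Some True} = {x\<in>{K..<x0}. g x = Some True}"
    using assms by (auto simp: not_le[symmetric])
  have "W (\<lambda>x. bitn (g x)) K x0 = (\<Sum>x\<in>{K..<x0}. if g x = Some True then (2::nat) ^ nat (x0 - 1 - x) else 0)"
    unfolding W_def by (rule sum.cong) (auto simp: bitn_eq)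
  also have "\<dots> = (\<Sum>x\<in>{x\<in>{K..<x0}. g x = Some True}. (2::nat) ^ nat (x0 - 1 - x))"
    by (rule sum.inter_filter[symmetric]) simp
  finally have r: "W (\<lambda>x. bitn (g x)) K x0 = (\<Sum>x\<in>{x\<in>{K..<x0}. g x = Some True}. (2::nat) ^ nat (x0 - 1 - x))" .
  have f: "finite {x\<in>{K..<x0}. g x = Some True}" by (rule finite_subset[of _ "{K..<x0}"]) auto
  show ?thesis unfolding e using r f by argo
qed

lemma col_base: "col_val C x0 n n = 0" by (simp add: col_val_def)

lemma col_step: "y0 < n \<Longrightarrow> col_val C x0 y0 n = trit_val (C (x0,y0+1)) + 3 * col_val C x0 (y0+1) n"
proof -
  assume y: "y0 < n"
  have s: "{y0<..n} = insert (y0+1) {y0+1<..n}" using y by auto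
  have "col_val C x0 y0 n = trit_val (C (x0,y0+1)) + (\<Sum>y\<in>{y0+1<..n}. trit_val (C (x0, y)) * 3 ^ nat (y - y0 - 1))"
    unfolding col_val_def s by simp
  also have "(\<Sum>y\<in>{y0+1<..n}. trit_val (C (x0, y)) * 3 ^ nat (y - y0 - 1)) =
      (\<Sum>y\<in>{y0+1<..n}. 3 * (trit_val (C (x0, y)) * 3 ^ nat (y - (y0+1) - 1)))"
  proof (rule sum.cong)
    fix y assume "y \<in> {y0+1<..n}"
    then have "nat (y - y0 - 1) = Suc (nat (y - (y0+1) - 1))" by auto
    then show "trit_val (C (x0, y)) * 3 ^ nat (y - y0 - 1) = 3 * (trit_val (C (x0, y)) * 3 ^ nat (y - (y0+1) - 1))"
      by simp
  qed simp
  also have "\<dots> = 3 * col_val C x0 (y0+1) n" by (simp add: col_val_def sum_distrib_left)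
  finally show ?thesis .
qed

context fixes \<alpha> :: "nat list"
begin

lemma LN: "is_defined (L \<alpha> (x,y)) \<Longrightarrow> y < nn \<alpha> \<Longrightarrow> is_defined (L \<alpha> (x,y+1))"
proof -
  assume d: "is_defined (L \<alpha> (x,y))" and y: "y < nn \<alpha>"
  show ?thesis
  proof (cases "init \<alpha> x y")
    case True
    then have "init \<alpha> 0 (y+1)" "x = 0" using y by (auto simp: init_def)
    then show ?thesis using LF0 enc_defined by metis
  next
    case False
    have "fst (L \<alpha> (x,y)) \<noteq> None" using d by (simp add: is_defined_def)
    then show ?thesis using LF4[OF _ y False] by blast
  qed
qed

lemma LW_k: "\<forall>x y. nat (nn \<alpha> - y) = k \<longrightarrow> is_defined (L \<alpha> (x,y)) \<longrightarrow> is_defined (L \<alpha> (x-1,y))"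
proof (induction k)
  case 0
  show ?case
  proof (intro allI impI)
    fix x y assume k: "nat (nn \<alpha> - y) = 0" and d: "is_defined (L \<alpha> (x,y))"
    have yle: "y \<le> nn \<alpha>"
    proof (rule ccontr)
      assume "\<not> y \<le> nn \<alpha>" then have "L \<alpha> (x,y) = (None,None)" using LF1 by simp
      then show False using d by (simp add: is_defined_def)
    qed
    then have yn: "y = nn \<alpha>" using k by simp
    have "x \<le> 0"
    proof (rule ccontr)
      assume "\<not> x \<le> 0" then have "L \<alpha> (x,y) = (None,None)" using LF1 by simp
      then show False using d by (simp add: is_defined_def)
    qed
    then have "fst (L \<alpha> (x-1,y)) \<noteq> None" using LF2[of "x-1" \<alpha>] yn by simp
    then show "is_defined (L \<alpha> (x-1,y))" using LF6[of \<alpha> "x-1" y] d by simp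
  qed
next
  case (Suc k)
  show ?case
  proof (intro allI impI)
    fix x y assume k: "nat (nn \<alpha> - y) = Suc k" and d: "is_defined (L \<alpha> (x,y))"
    have y: "y < nn \<alpha>" using k by simp
    have d1: "is_defined (L \<alpha> (x,y+1))" using LN[OF d y] .
    have "nat (nn \<alpha> - (y+1)) = k" using k by simp
    then have d2: "is_defined (L \<alpha> (x-1,y+1))" using Suc.IH d1 by blast
    have "fst (L \<alpha> (x-1,y)) \<noteq> None" using LF5[of \<alpha> "x-1" y] d1 d2 by simp
    then show "is_defined (L \<alpha> (x-1,y))" using LF6[of \<alpha> "x-1" y] d by simp
  qed
qed

lemma LW: "is_defined (L \<alpha> (x,y)) \<Longrightarrow> is_defined (L \<alpha> (x-1,y))"
  using LW_k by blast

lemma LW_all_m: "is_defined (L \<alpha> (x0,y)) \<Longrightarrow> is_defined (L \<alpha> (x0 - int m,y))"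
proof (induction m)
  case 0 then show ?case by simp
next
  case (Suc m)
  then have "is_defined (L \<alpha> (x0 - int m - 1,y))" using LW by blast
  then show ?case by (simp add: algebra_simps)
qed

lemma LW_all: "is_defined (L \<alpha> (x0,y)) \<Longrightarrow> x \<le> x0 \<Longrightarrow> is_defined (L \<alpha> (x,y))"
  using LW_all_m[of x0 y "nat (x0 - x)"] by simp

end



context fixes \<alpha> :: "nat list"
begin

lemma step:
  assumes y: "y0 < nn \<alpha>" and dN: "is_defined (L \<alpha> (x0,y0+1))" and dW: "is_defined (L \<alpha> (x0-1,y0))"
    and K1: "K1 \<le> x0" and z1: "\<forall>x<K1. fst (L \<alpha> (x,y0+1)) = Some False"
    and v1: "W (\<lambda>x. bitn (fst (L \<alpha> (x,y0+1)))) K1 x0 = col_val (L \<alpha>) x0 (y0+1) (nn \<alpha>)"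
  shows "\<exists>K\<le>x0. (\<forall>x<K. fst (L \<alpha> (x,y0)) = Some False) \<and>
     W (\<lambda>x. bitn (fst (L \<alpha> (x,y0)))) K x0 = col_val (L \<alpha>) x0 y0 (nn \<alpha>)"
proof -
  define s where "s x = bitn (fst (L \<alpha> (x,y0+1)))" for x
  define c where "c x = bitn (snd (L \<alpha> (x,y0+1)))" for x
  define s' where "s' x = bitn (fst (L \<alpha> (x,y0)))" for x
  have x0: "x0 \<le> 0"
  proof (rule ccontr)
    assume "\<not> x0 \<le> 0" then have "L \<alpha> (x0,y0+1) = (None,None)" using LF1 by simp
    then show False using dN by (simp add: is_defined_def)
  qed
  have dA: "is_defined (L \<alpha> (x,y0+1))" if "x \<le> x0" for x using LW_all[OF dN that] .
  have dB: "is_defined (L \<alpha> (x,y0))" if "x < x0" for x using LW_all[OF dW] that by simp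
  have ni: "\<not> init \<alpha> x y" if "x < x0" for x y using that x0 by (simp add: init_def)
  have carry: "snd (L \<alpha> (x,y0+1)) = Some (maj (L \<alpha> (x,y0+1)) (L \<alpha> (x+1,y0+1)))" if xl: "x < x0" for x
  proof -
    have "\<not> (\<forall>x'>x. \<not> is_defined (L \<alpha> (x',y0+1)))" using dN xl by blast
    then show ?thesis using LF3[OF dA ni[OF xl]] xl by auto
  qed
  have sumb: "fst (L \<alpha> (x,y0)) = Some (par (L \<alpha> (x,y0+1)) (L \<alpha> (x+1,y0+1)))" if xl: "x < x0" for x
  proof -
    have "fst (L \<alpha> (x,y0)) \<noteq> None" using dB[OF xl] by (simp add: is_defined_def)
    from LF4[OF this y ni[OF xl]] dA[of "x+1"] xl show ?thesis by simp
  qed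
  have cx: "c x = bitn (Some (2 \<le> s x + s (x+1) + c (x+1)))" if xl: "x < x0" for x
    using carry[OF xl] by (simp add: c_def s_def maj_def)
  have sx: "s' x = bitn (Some (odd (s x + s (x+1) + c (x+1))))" if xl: "x < x0" for x
    using sumb[OF xl] by (simp add: s'_def s_def c_def par_def)
  have adder: "\<forall>x. K \<le> x \<and> x < x0 \<longrightarrow> s' x + 2 * c x = s x + s (x+1) + c (x+1)" for K
  proof (intro allI impI)
    fix x assume "K \<le> x \<and> x < x0"
    then have xl: "x < x0" by simp
    have "s x + s (x+1) + c (x+1) \<le> 3" using bitn_le1[of "fst (L \<alpha> (x,y0+1))"] bitn_le1[of "fst (L \<alpha> (x+1,y0+1))"]
      bitn_le1[of "snd (L \<alpha> (x+1,y0+1))"] by (simp add: s_def c_def)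
    then show "s' x + 2 * c x = s x + s (x+1) + c (x+1)" unfolding sx[OF xl] cx[OF xl] by (rule add_bits)
  qed
  have s0: "s x = 0" if "x < K1" for x using z1 that by (simp add: s_def bitn_def)
  have c0: "c x = 0" if "x + 1 < K1" for x
  proof -
    have xl: "x < x0" using that K1 by simp
    have "c (x+1) \<le> 1" using bitn_le1 by (simp add: c_def)
    then show ?thesis using cx[OF xl] s0[of x] s0[of "x+1"] that by (simp add: bitn_Some)
  qed
  define K where "K = K1 - 2"
  have zK: "\<forall>x<K. fst (L \<alpha> (x,y0)) = Some False"
  proof (intro allI impI)
    fix x assume "x < K"
    then have xl: "x < x0" and a: "x < K1" "x + 1 < K1" "x + 1 + 1 < K1" using K1 by (auto simp: K_def)
    have "fst (L \<alpha> (x,y0)) = Some (odd (s x + s (x+1) + c (x+1)))"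
      using sumb[OF xl] by (simp add: s_def c_def par_def)
    then show "fst (L \<alpha> (x,y0)) = Some False" using s0[OF a(1)] s0[OF a(2)] c0[OF a(3)] by simp
  qed
  have sK: "s K = 0" using s0[of K] by (simp add: K_def)
  have cK: "c K = 0" using c0[of K] by (simp add: K_def)
  have Kle: "K \<le> x0" using K1 by (simp add: K_def)
  have WW: "W s K x0 = W s K1 x0" by (rule W_ext) (use K1 s0 in \<open>auto simp: K_def\<close>)
  have alg: "W s' K x0 = 3 * W s K x0 + s x0 + c x0" by (rule adder_alg[OF adder sK cK Kle])
  have v1': "W s K1 x0 = col_val (L \<alpha>) x0 (y0+1) (nn \<alpha>)" using v1 by (simp add: s_def[abs_def])
  have "W s' K x0 = col_val (L \<alpha>) x0 y0 (nn \<alpha>)"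
    unfolding col_step[OF y] alg WW v1' by (simp add: trit_val_def s_def c_def)
  then show ?thesis using zK Kle by (intro exI[of _ K]) (simp add: s'_def[abs_def])
qed

lemma claim:
  "\<forall>y0 x0. nat (nn \<alpha> - 1 - y0) = d \<longrightarrow> y0 < nn \<alpha> \<longrightarrow> is_defined (L \<alpha> (x0,y0+1)) \<longrightarrow> is_defined (L \<alpha> (x0-1,y0)) \<longrightarrow>
    (\<forall>y. y0 < y \<and> y \<le> nn \<alpha> \<longrightarrow> is_defined (L \<alpha> (x0,y))) \<and>
    (\<exists>K\<le>x0. (\<forall>x<K. fst (L \<alpha> (x,y0)) = Some False) \<and>
       W (\<lambda>x. bitn (fst (L \<alpha> (x,y0)))) K x0 = col_val (L \<alpha>) x0 y0 (nn \<alpha>))"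
proof (induction d)
  case 0
  show ?case
  proof (intro allI impI)
    fix y0 x0 assume k: "nat (nn \<alpha> - 1 - y0) = 0" and y: "y0 < nn \<alpha>"
      and dN: "is_defined (L \<alpha> (x0,y0+1))" and dW: "is_defined (L \<alpha> (x0-1,y0))"
    have yn: "y0 + 1 = nn \<alpha>" using k y by simp
    have x0: "x0 \<le> 0"
    proof (rule ccontr)
      assume "\<not> x0 \<le> 0" then have "L \<alpha> (x0,y0+1) = (None,None)" using LF1 by simp
      then show False using dN by (simp add: is_defined_def)
    qed
    have col: "\<forall>y. y0 < y \<and> y \<le> nn \<alpha> \<longrightarrow> is_defined (L \<alpha> (x0,y))"
    proof (intro allI impI)
      fix y assume "y0 < y \<and> y \<le> nn \<alpha>" then have "y = y0+1" using yn by simp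
      then show "is_defined (L \<alpha> (x0,y))" using dN by simp
    qed
    have z1: "\<forall>x<x0. fst (L \<alpha> (x,y0+1)) = Some False" using LF2 x0 yn by simp
    have v1: "W (\<lambda>x. bitn (fst (L \<alpha> (x,y0+1)))) x0 x0 = col_val (L \<alpha>) x0 (y0+1) (nn \<alpha>)"
      using yn by (simp add: W_zero col_base)
    show "(\<forall>y. y0 < y \<and> y \<le> nn \<alpha> \<longrightarrow> is_defined (L \<alpha> (x0,y))) \<and>
    (\<exists>K\<le>x0. (\<forall>x<K. fst (L \<alpha> (x,y0)) = Some False) \<and>
       W (\<lambda>x. bitn (fst (L \<alpha> (x,y0)))) K x0 = col_val (L \<alpha>) x0 y0 (nn \<alpha>))"
      using col step[OF y dN dW order_refl z1 v1] by blast
  qed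
next
  case (Suc d)
  show ?case
  proof (intro allI impI)
    fix y0 x0 assume k: "nat (nn \<alpha> - 1 - y0) = Suc d" and y: "y0 < nn \<alpha>"
      and dN: "is_defined (L \<alpha> (x0,y0+1))" and dW: "is_defined (L \<alpha> (x0-1,y0))"
    have y1: "y0 + 1 < nn \<alpha>" using k by simp
    have k1: "nat (nn \<alpha> - 1 - (y0+1)) = d" using k by simp
    have dN1: "is_defined (L \<alpha> (x0,y0+1+1))" using LN[OF dN y1] .
    have dW1: "is_defined (L \<alpha> (x0-1,y0+1))" using LN[OF dW y] .
    have IH: "(\<forall>y. y0+1 < y \<and> y \<le> nn \<alpha> \<longrightarrow> is_defined (L \<alpha> (x0,y))) \<and>
      (\<exists>K\<le>x0. (\<forall>x<K. fst (L \<alpha> (x,y0+1)) = Some False) \<and>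
       W (\<lambda>x. bitn (fst (L \<alpha> (x,y0+1)))) K x0 = col_val (L \<alpha>) x0 (y0+1) (nn \<alpha>))"
      using Suc.IH k1 y1 dN1 dW1 by blast
    then obtain K1 where K1: "K1 \<le> x0" "\<forall>x<K1. fst (L \<alpha> (x,y0+1)) = Some False"
      "W (\<lambda>x. bitn (fst (L \<alpha> (x,y0+1)))) K1 x0 = col_val (L \<alpha>) x0 (y0+1) (nn \<alpha>)" by blast
    have col: "\<forall>y. y0 < y \<and> y \<le> nn \<alpha> \<longrightarrow> is_defined (L \<alpha> (x0,y))"
    proof (intro allI impI)
      fix y assume a: "y0 < y \<and> y \<le> nn \<alpha>"
      show "is_defined (L \<alpha> (x0,y))"
      proof (cases "y = y0+1")
        case True then show ?thesis using dN by simp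
      next
        case False then show ?thesis using IH a by simp
      qed
    qed
    show "(\<forall>y. y0 < y \<and> y \<le> nn \<alpha> \<longrightarrow> is_defined (L \<alpha> (x0,y))) \<and>
    (\<exists>K\<le>x0. (\<forall>x<K. fst (L \<alpha> (x,y0)) = Some False) \<and>
       W (\<lambda>x. bitn (fst (L \<alpha> (x,y0)))) K x0 = col_val (L \<alpha>) x0 y0 (nn \<alpha>))"
      using col step[OF y dN dW K1] by blast
  qed
qed

end

theorem mainTheorem4:
  fixes \<alpha> :: "nat list" and x0 y0 :: int
  assumes "set \<alpha> \<subseteq> {0, 1, 2}"
    and "is_defined (c_inf \<alpha> (cadd (x0, y0) dirN))"
    and "is_defined (c_inf \<alpha> (cadd (x0, y0) dirW))"
  shows "\<exists>z::nat.
     (\<forall>y. y0 < y \<and> y \<le> int (length \<alpha>) \<longrightarrow> is_defined (c_inf \<alpha> (x0, y)))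
   \<and> col_val (c_inf \<alpha>) x0 y0 (int (length \<alpha>)) = z
   \<and> (\<forall>x<x0. fst (c_inf \<alpha> (x, y0)) \<noteq> None)
   \<and> finite {x. x < x0 \<and> fst (c_inf \<alpha> (x, y0)) = Some True}
   \<and> (\<Sum>x\<in>{x. x < x0 \<and> fst (c_inf \<alpha> (x, y0)) = Some True}. (2::nat) ^ nat (x0 - 1 - x)) = z"
proof -
  have dN: "is_defined (L \<alpha> (x0,y0+1))" using assms(2) by (simp add: cadd_def dirN_def)
  have dW: "is_defined (L \<alpha> (x0-1,y0))" using assms(3) by (simp add: cadd_def dirW_def)
  have y: "y0 < nn \<alpha>"
  proof (rule ccontr)
    assume "\<not> y0 < nn \<alpha>" then have "L \<alpha> (x0,y0+1) = (None,None)" using LF1 by simp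
    then show False using dN by (simp add: is_defined_def)
  qed
  have r: "(\<forall>y. y0 < y \<and> y \<le> nn \<alpha> \<longrightarrow> is_defined (L \<alpha> (x0,y))) \<and>
    (\<exists>K\<le>x0. (\<forall>x<K. fst (L \<alpha> (x,y0)) = Some False) \<and>
       W (\<lambda>x. bitn (fst (L \<alpha> (x,y0)))) K x0 = col_val (L \<alpha>) x0 y0 (nn \<alpha>))"
    using claim[of \<alpha> "nat (nn \<alpha> - 1 - y0)"] y dN dW by blast
  then obtain K where K: "K \<le> x0" "\<forall>x<K. fst (L \<alpha> (x,y0)) = Some False"
    "W (\<lambda>x. bitn (fst (L \<alpha> (x,y0)))) K x0 = col_val (L \<alpha>) x0 y0 (nn \<alpha>)" by blast
  have fw: "\<forall>x<x0. fst (L \<alpha> (x,y0)) \<noteq> None"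
  proof (intro allI impI)
    fix x assume "x < x0"
    then have "is_defined (L \<alpha> (x,y0))" using LW_all[OF dW] by simp
    then show "fst (L \<alpha> (x,y0)) \<noteq> None" by (simp add: is_defined_def)
  qed
  show ?thesis using r fw conv[OF K(1), of "\<lambda>x. fst (L \<alpha> (x,y0))"] K by (intro exI[of _ "col_val (L \<alpha>) x0 y0 (nn \<alpha>)"]) simp
qed


end
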